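(* Let $$B= \begin{pmatrix} 1& 2& 2\\ 2&1& 2\\ 2&2& 3 \end{pmatrix}.$$ For every positive integer $n$, writing $B^n(3,4,5)^\top=(x,y,z)^\top$, the circumradius of the triangle with side lengths $x,y,z$ is $$R_n=\frac{(5\sqrt{2}-7)(3-2\sqrt{2})^n+(5\sqrt{2}+7)(3+2\sqrt{2})^n}{4\sqrt{2}}.$$
   Context: Triples are regarded as row vectors and $\top$ denotes transpose. The triple $B^n(3,4,5)^\top$ is a primitive Pythagorean triple (positive integers with $x^2+y^2=z^2$), so the triangle is a right triangle with hypotenuse $z$. *)

theory Defs
  imports "HOL-Analysis.Analysis"
begin

definition Bmat :: "real^3^3" where
  "Bmat = vector [vector [1,2,2], vector [2,1,2], vector [2,2,3]]"

primrec matrix_pow :: "real^'n^'n \<Rightarrow> nat \<Rightarrow> real^'n^'n" where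
  "matrix_pow A 0 = mat 1"
| "matrix_pow A (Suc n) = A ** matrix_pow A n"

text \<open>Circumradius of a (nondegenerate) triangle with side lengths a, b, c:
  R = abc / (4 * Area), with Area given by Heron's formula.\<close>
definition circumradius :: "real \<Rightarrow> real \<Rightarrow> real \<Rightarrow> real" where
  "circumradius a b c =
     a * b * c / (4 * sqrt (((a+b+c)/2) * ((b+c-a)/2) * ((a+c-b)/2) * ((a+b-c)/2)))"

end

theory Submission
  imports Defs
begin

fun trip :: "nat \<Rightarrow> real \<times> real \<times> real" where
  "trip 0 = (3,4,5)"
| "trip (Suc n) = (case trip n of (x,y,z) \<Rightarrow> (x+2*y+2*z, 2*x+y+2*z, 2*x+2*y+3*z))"

lemma Bmat_mult: "Bmat *v vector [x,y,z] = vector [x+2*y+2*z, 2*x+y+2*z, 2*x+2*y+3*z]"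
  unfolding Bmat_def
  by (simp add: vec_eq_iff forall_3 sum_3 matrix_vector_mult_def vector_3)

lemma pow_trip: "matrix_pow Bmat n *v vector [3,4,5] =
   (case trip n of (x,y,z) \<Rightarrow> vector [x,y,z])"
proof (induction n)
  case 0
  then show ?case by simp
next
  case (Suc n)
  have "matrix_pow Bmat (Suc n) *v vector [3,4,5] = Bmat *v (matrix_pow Bmat n *v vector [3,4,5])"
    by (simp add: matrix_vector_mul_assoc)
  also have "\<dots> = (case trip (Suc n) of (x,y,z) \<Rightarrow> vector [x,y,z])"
    using Suc by (cases "trip n") (simp add: Bmat_mult)
  finally show ?case .
qed

lemma trip_props: "trip n = (x,y,z) \<Longrightarrow> x > 0 \<and> y > 0 \<and> z > 0 \<and> x^2 + y^2 = z^2
  \<and> z * (2 * sqrt 2) = (5* sqrt 2+7)*(3+2* sqrt 2)^n + (5* sqrt 2-7)*(3-2* sqrt 2)^n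
  \<and> (x+y) * 2 = (5* sqrt 2+7)*(3+2* sqrt 2)^n - (5* sqrt 2-7)*(3-2* sqrt 2)^n"
proof (induction n arbitrary: x y z)
  case 0
  then show ?case by (simp add: algebra_simps)
next
  case (Suc n)
  obtain a b c where t: "trip n = (a,b,c)" by (cases "trip n")
  note IH = Suc.IH[OF t]
  have xyz: "x = a+2*b+2*c" "y = 2*a+b+2*c" "z = 2*a+2*b+3*c" using Suc.prems t by auto
  define A where "A = (5* sqrt 2+7)*(3+2* sqrt 2)^n"
  define B where "B = (5* sqrt 2-7)*(3-2* sqrt 2)^n"
  have s2: "sqrt 2 * sqrt 2 = 2" by simp
  have e1: "c * (2* sqrt 2) = A + B" and e2: "(a+b)*2 = A - B" using IH A_def B_def by auto
  have "z * (2 * sqrt 2) = 2* sqrt 2 * (A - B) + 3*(A+B)"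
  proof -
    have "z * (2 * sqrt 2) = (a+b)*2*(2* sqrt 2) + 3*(c*(2* sqrt 2))" unfolding xyz by (simp add: algebra_simps)
    also have "\<dots> = (A-B)*(2* sqrt 2) + 3*(A+B)" by (simp only: e1 e2)
    finally show ?thesis by (simp add: algebra_simps)
  qed
  also have "\<dots> = (5* sqrt 2+7)*(3+2* sqrt 2)^Suc n + (5* sqrt 2-7)*(3-2* sqrt 2)^Suc n"
    unfolding A_def B_def by (simp add: algebra_simps)
  finally have z1: "z * (2 * sqrt 2) = (5* sqrt 2+7)*(3+2* sqrt 2)^Suc n + (5* sqrt 2-7)*(3-2* sqrt 2)^Suc n" .
  have "c * 8 = 2 * sqrt 2 * (A + B)"
  proof -
    have "c * 8 = c * (2 * sqrt 2) * (2 * sqrt 2)" using s2 by (simp add: algebra_simps)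
    then show ?thesis using e1 by simp
  qed
  then have "(x+y) * 2 = 3*(A-B) + 2* sqrt 2*(A+B)"
    unfolding xyz using e2 by (simp add: algebra_simps)
  also have "\<dots> = (5* sqrt 2+7)*(3+2* sqrt 2)^Suc n - (5* sqrt 2-7)*(3-2* sqrt 2)^Suc n"
    unfolding A_def B_def by (simp add: algebra_simps)
  finally have z2: "(x+y) * 2 = (5* sqrt 2+7)*(3+2* sqrt 2)^Suc n - (5* sqrt 2-7)*(3-2* sqrt 2)^Suc n" .
  have py: "x^2+y^2 = z^2" unfolding xyz using IH by (simp add: power2_eq_square algebra_simps)
  show ?case using IH z1 z2 py unfolding xyz by simp
qed

lemma circ_right: assumes "x > 0" "y > 0" "z > 0" "x^2+y^2 = z^2"
  shows "circumradius x y z = z / 2"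
proof -
  have "((x+y+z)/2) * ((y+z-x)/2) * ((x+z-y)/2) * ((x+y-z)/2) = (x*y/2)^2"
  proof -
    have "((x+y+z)/2) * ((y+z-x)/2) * ((x+z-y)/2) * ((x+y-z)/2)
        = (2*x^2*y^2 + 2*x^2*z^2 + 2*y^2*z^2 - x^4 - y^4 - z^4) / 16"
      by (simp add: field_simps power2_eq_square power4_eq_xxxx)
    also have "\<dots> = (x*y/2)^2"
    proof -
      have z2: "z^2 = x^2+y^2" using assms(4) by simp
      have "z^4 = (x^2+y^2)^2" by (metis z2 power_mult numeral_Bit0 mult_2_right power2_eq_square)
      then show ?thesis using z2 by (simp add: field_simps power2_eq_square power4_eq_xxxx)
    qed
    finally show ?thesis .
  qed
  then have "sqrt (((x+y+z)/2) * ((y+z-x)/2) * ((x+z-y)/2) * ((x+y-z)/2)) = x*y/2"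
    using assms by simp
  then show ?thesis unfolding circumradius_def using assms by (simp add: field_simps)
qed

theorem mainTheorem8:
  fixes n :: nat
  assumes "n \<ge> 1"
  shows "let v = matrix_pow Bmat n *v vector [3, 4, 5]
         in circumradius (v $ 1) (v $ 2) (v $ 3) =
            ((5 * sqrt 2 - 7) * (3 - 2 * sqrt 2) ^ n + (5 * sqrt 2 + 7) * (3 + 2 * sqrt 2) ^ n)
              / (4 * sqrt 2)"
proof -
  obtain x y z where t: "trip n = (x,y,z)" by (cases "trip n")
  note P = trip_props[OF t]
  have v: "matrix_pow Bmat n *v vector [3,4,5] = vector [x,y,z]" using pow_trip[of n] t by simp
  have "circumradius x y z = z / 2" using P circ_right by auto
  also have "\<dots> = z * (2* sqrt 2) / (4 * sqrt 2)" by simp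
  also have "\<dots> = ((5 * sqrt 2 - 7) * (3 - 2 * sqrt 2) ^ n + (5 * sqrt 2 + 7) * (3 + 2 * sqrt 2) ^ n)
              / (4 * sqrt 2)" using P by (simp only: add.commute)
  finally show ?thesis using v by (simp add: vector_3 Let_def)
qed

end
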